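(* Let $m\ge2$, let $K/F$ be a cyclic Galois field extension of degree $m$ with $\mathrm{Gal}(K/F)=\langle\sigma\rangle$, and suppose $F$ has no non-trivial $m$th root of unity. Let $A=(K/F,\sigma,d)$ be a nonassociative cyclic algebra of degree $m$ where $d\in K^\times$ is not contained in any proper subfield of $K$. Then every $F$-automorphism of $A$ restricts to the identity on $K$, and $\mathrm{Aut}_F(A)\cong\ker(N_{K/F})$. In particular, all automorphisms of $A$ are inner.
   Context: For $\sigma\in\mathrm{Aut}(K)$, $K[t;\sigma]$ is the twisted polynomial ring (polynomials $\sum a_it^i$, $a_i\in K$, with multiplication determined by $ta=\sigma(a)t$). For $d\in K^\times$, $(K/F,\sigma,d)$ is the $F$-vector space of polynomials of degree $<m$ in $K[t;\sigma]$ with multiplication $g\circ h=$ remainder of $gh$ on right division by $t^m-d$ (i.e. $gh=q(t^m-d)+r$ with $\deg r<m$); it is a unital nonassociative $F$-algebra containing $K$. An automorphism $G$ of a unital algebra $A$ is inner if there is $c\in A$ with a left inverse $c_l$ (i.e. $c_lc=1$) such that $G(x)=(c_lx)c$ for all $x\in A$. *)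

theory Defs
  imports "HOL-Algebra.Group" "HOL-Library.FuncSet"
begin

(* Subfields of the ambient field 'k (the field K is the type 'k itself). *)
definition is_subfield :: "'k::field set \<Rightarrow> bool" where
  "is_subfield L \<longleftrightarrow> 0 \<in> L \<and> 1 \<in> L \<and> (\<forall>x\<in>L. \<forall>y\<in>L. x + y \<in> L \<and> x * y \<in> L)
     \<and> (\<forall>x\<in>L. - x \<in> L) \<and> (\<forall>x\<in>L. x \<noteq> 0 \<longrightarrow> inverse x \<in> L)"

definition field_aut :: "('k::field \<Rightarrow> 'k) \<Rightarrow> bool" where
  "field_aut \<tau> \<longleftrightarrow> bij \<tau> \<and> (\<forall>x y. \<tau> (x + y) = \<tau> x + \<tau> y) \<and> (\<forall>x y. \<tau> (x * y) = \<tau> x * \<tau> y)"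

definition Gal :: "'k::field set \<Rightarrow> ('k \<Rightarrow> 'k) set" where
  "Gal F = {\<tau>. field_aut \<tau> \<and> (\<forall>a\<in>F. \<tau> a = a)}"

definition fixed_field :: "('k \<Rightarrow> 'k) set \<Rightarrow> 'k set" where
  "fixed_field H = {x. \<forall>\<tau>\<in>H. \<tau> x = x}"

definition normKF :: "('k::field \<Rightarrow> 'k) \<Rightarrow> nat \<Rightarrow> 'k \<Rightarrow> 'k" where
  "normKF \<sigma> m k = (\<Prod>i<m. (\<sigma> ^^ i) k)"

(* Twisted polynomial ring K[t;sigma]: polynomials sum a_i t^i as finitely
   supported coefficient functions nat => 'k *)
definition tpolys :: "(nat \<Rightarrow> 'k::zero) set" where
  "tpolys = {g. finite {i. g i \<noteq> 0}}"

(* product in K[t;sigma], determined by t a = sigma(a) t: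
   (a t^i)(b t^j) = a sigma^i(b) t^(i+j) *)
definition tmult :: "('k::comm_ring_1 \<Rightarrow> 'k) \<Rightarrow> (nat \<Rightarrow> 'k) \<Rightarrow> (nat \<Rightarrow> 'k) \<Rightarrow> nat \<Rightarrow> 'k" where
  "tmult \<sigma> g h n = (\<Sum>i\<le>n. g i * (\<sigma> ^^ i) (h (n - i)))"

definition tm_minus_d :: "nat \<Rightarrow> 'k::comm_ring_1 \<Rightarrow> nat \<Rightarrow> 'k" where
  "tm_minus_d m d = (\<lambda>i. (if i = m then 1 else 0) - (if i = 0 then d else 0))"

(* underlying set of (K/F,sigma,d): polynomials of degree < m *)
definition cyc_carrier :: "nat \<Rightarrow> (nat \<Rightarrow> 'k::zero) set" where
  "cyc_carrier m = {g. \<forall>i\<ge>m. g i = 0}"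

(* multiplication of (K/F,sigma,d): remainder of gh on right division by t^m - d *)
definition cyc_mult :: "('k::comm_ring_1 \<Rightarrow> 'k) \<Rightarrow> nat \<Rightarrow> 'k \<Rightarrow> (nat \<Rightarrow> 'k) \<Rightarrow> (nat \<Rightarrow> 'k) \<Rightarrow> nat \<Rightarrow> 'k" where
  "cyc_mult \<sigma> m d g h = (THE r. r \<in> cyc_carrier m \<and>
      (\<exists>q\<in>tpolys. tmult \<sigma> g h = (\<lambda>n. tmult \<sigma> q (tm_minus_d m d) n + r n)))"

(* embedding of K into the algebra (constant polynomials); unit is cconst 1 *)
definition cconst :: "'k::zero \<Rightarrow> nat \<Rightarrow> 'k" where
  "cconst k = (\<lambda>i. if i = 0 then k else 0)"

definition cyc_AutF :: "'k::field set \<Rightarrow> ('k \<Rightarrow> 'k) \<Rightarrow> nat \<Rightarrow> 'k \<Rightarrow> ((nat \<Rightarrow> 'k) \<Rightarrow> (nat \<Rightarrow> 'k)) set" where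
  "cyc_AutF F \<sigma> m d = {G. G \<in> extensional (cyc_carrier m) \<and> bij_betw G (cyc_carrier m) (cyc_carrier m)
      \<and> (\<forall>x\<in>cyc_carrier m. \<forall>y\<in>cyc_carrier m. G (\<lambda>i. x i + y i) = (\<lambda>i. G x i + G y i))
      \<and> (\<forall>c\<in>F. \<forall>x\<in>cyc_carrier m. G (\<lambda>i. c * x i) = (\<lambda>i. c * G x i))
      \<and> (\<forall>x\<in>cyc_carrier m. \<forall>y\<in>cyc_carrier m. G (cyc_mult \<sigma> m d x y) = cyc_mult \<sigma> m d (G x) (G y))}"

definition cyc_Aut_group :: "'k::field set \<Rightarrow> ('k \<Rightarrow> 'k) \<Rightarrow> nat \<Rightarrow> 'k \<Rightarrow> ((nat \<Rightarrow> 'k) \<Rightarrow> (nat \<Rightarrow> 'k)) monoid" where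
  "cyc_Aut_group F \<sigma> m d = \<lparr>carrier = cyc_AutF F \<sigma> m d,
      monoid.mult = (\<lambda>G H. compose (cyc_carrier m) G H), one = restrict id (cyc_carrier m)\<rparr>"

definition norm_kernel_group :: "('k::field \<Rightarrow> 'k) \<Rightarrow> nat \<Rightarrow> 'k monoid" where
  "norm_kernel_group \<sigma> m = \<lparr>carrier = {k. normKF \<sigma> m k = 1}, monoid.mult = (*), one = 1\<rparr>"

definition cyc_inner :: "('k::field \<Rightarrow> 'k) \<Rightarrow> nat \<Rightarrow> 'k \<Rightarrow> ((nat \<Rightarrow> 'k) \<Rightarrow> (nat \<Rightarrow> 'k)) \<Rightarrow> bool" where
  "cyc_inner \<sigma> m d G \<longleftrightarrow> (\<exists>c\<in>cyc_carrier m. \<exists>cl\<in>cyc_carrier m. cyc_mult \<sigma> m d cl c = cconst 1 \<and>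
      (\<forall>x\<in>cyc_carrier m. G x = cyc_mult \<sigma> m d (cyc_mult \<sigma> m d cl x) c))"

end

theory Submission
  imports Defs
begin

lemma fa_basic:
  assumes "field_aut f"
  shows "f (x + y) = f x + f y" "f (x * y) = f x * f y" "f 0 = 0" "f 1 = 1"
    "f (- x) = - f x" "f (x - y) = f x - f y" "f (inverse x) = inverse (f x)" "inj f"
    "(f x = f y) = (x = y)"
proof -
  show a: "f (x + y) = f x + f y" "f (x * y) = f x * f y" for x y using assms by (auto simp: field_aut_def)
  show i: "inj f" using assms by (auto simp: field_aut_def bij_def)
  show z: "f 0 = 0" using a(1)[of 0 0] by (metis add_left_cancel add.right_neutral)
  show "(f x = f y) = (x = y)" for x y using i by (auto dest: injD)
  have "f 1 \<noteq> 0" using i z by (metis injD zero_neq_one)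
  then show o: "f 1 = 1" using a(2)[of 1 1] by (metis mult.right_neutral mult_left_cancel)
  show n: "f (- x) = - f x" for x using a(1)[of x "-x"] z by (simp add: eq_neg_iff_add_eq_0 add.commute)
  show "f (x - y) = f x - f y" using a(1)[of x "-y"] n[of y] by simp
  show "f (inverse x) = inverse (f x)"
  proof (cases "x = 0")
    case True then show ?thesis using z by simp
  next
    case False
    then have "f x * f (inverse x) = 1" using a(2)[of x "inverse x"] o by simp
    then show ?thesis by (metis inverse_unique)
  qed
qed

lemma fa_funpow: assumes "field_aut f" shows "field_aut (f ^^ n)"
proof -
  have b: "bij (f^^n)" using assms bij_betw_funpow[of f UNIV n] by (auto simp: field_aut_def)
  have "(f^^n) (x + y) = (f^^n) x + (f^^n) y \<and> (f^^n) (x * y) = (f^^n) x * (f^^n) y" for x y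
    by (induction n) (auto simp: fa_basic[OF assms])
  then show ?thesis using b by (auto simp: field_aut_def)
qed

lemma fa_sum: assumes "field_aut f" shows "f (sum g S) = (\<Sum>i\<in>S. f (g i))"
  by (induction S rule: infinite_finite_induct) (auto simp: fa_basic[OF assms])

lemma dedekind:
  fixes f :: "nat \<Rightarrow> 'k::field \<Rightarrow> 'k"
  assumes mult: "\<And>i x y. f i (x*y) = f i x * f i y" and one: "\<And>i. f i 1 = 1"
  shows "finite I \<Longrightarrow> inj_on f I \<Longrightarrow> (\<forall>a. (\<Sum>i\<in>I. w i * f i a) = 0) \<Longrightarrow> \<forall>i\<in>I. w i = 0"
proof (induction I arbitrary: w rule: finite_induct)
  case empty then show ?case by simp
next
  case (insert j I)
  have inj: "inj_on f I" using insert.prems by auto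
  have wI: "w i = 0" if iI: "i \<in> I" for i
  proof -
    have "f i \<noteq> f j" using insert.prems(1) iI insert.hyps(2) by (metis inj_on_contraD insertCI)
    then obtain y where y: "f j y \<noteq> f i y" by (metis ext)
    define w' where "w' l = w l * (f l y - f j y)" for l
    have "\<forall>a. (\<Sum>l\<in>I. w' l * f l a) = 0"
    proof
      fix a
      have s1: "(\<Sum>l\<in>insert j I. w l * f l y * f l a) = 0"
        using insert.prems(2)[rule_format, of "y * a"] by (simp add: mult mult.assoc)
      have s2: "(\<Sum>l\<in>insert j I. f j y * (w l * f l a)) = 0"
        using insert.prems(2)[rule_format, of a] by (simp add: sum_distrib_left[symmetric])
      have "(\<Sum>l\<in>insert j I. w' l * f l a) = (\<Sum>l\<in>insert j I. w l * f l y * f l a) - (\<Sum>l\<in>insert j I. f j y * (w l * f l a))"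
        by (simp add: sum_subtractf[symmetric] w'_def algebra_simps)
      also have "\<dots> = 0" using s1 s2 by simp
      finally show "(\<Sum>l\<in>I. w' l * f l a) = 0" using insert.hyps by (simp add: w'_def)
    qed
    from insert.IH[OF inj this] iI have "w' i = 0" by auto
    then show ?thesis using y by (simp add: w'_def)
  qed
  have "(\<Sum>i\<in>insert j I. w i * f i 1) = 0" using insert.prems(2) by blast
  then have "w j = 0" using insert.hyps wI by (simp add: one)
  then show ?case using wI by auto
qed

definition tm :: "'k::zero \<Rightarrow> nat \<Rightarrow> nat \<Rightarrow> 'k" where
  "tm a i = (\<lambda>n. if n = i then a else 0)"

lemma cconst_tm: "cconst a = tm a 0" by (simp add: cconst_def tm_def)

locale cyc =
  fixes \<sigma> :: "'k::field \<Rightarrow> 'k" and m :: nat and d :: 'k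
  assumes aut: "field_aut \<sigma>" and mpos: "0 < m" and \<sigma>m: "\<sigma> ^^ m = id"
begin

abbreviation C :: "(nat \<Rightarrow> 'k) set" where "C \<equiv> cyc_carrier m"

lemma sp: "(\<sigma>^^i) (x + y) = (\<sigma>^^i) x + (\<sigma>^^i) y" "(\<sigma>^^i) (x * y) = (\<sigma>^^i) x * (\<sigma>^^i) y"
  "(\<sigma>^^i) 0 = 0" "(\<sigma>^^i) 1 = 1" "(\<sigma>^^i) (- x) = - (\<sigma>^^i) x" "(\<sigma>^^i) (x - y) = (\<sigma>^^i) x - (\<sigma>^^i) y"
  "(\<sigma>^^i) (inverse x) = inverse ((\<sigma>^^i) x)" "((\<sigma>^^i) x = (\<sigma>^^i) y) = (x = y)"
  using fa_basic[OF fa_funpow[OF aut]] by auto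

lemma sp1: "\<sigma> (x + y) = \<sigma> x + \<sigma> y" "\<sigma> (x * y) = \<sigma> x * \<sigma> y"
  "\<sigma> 0 = 0" "\<sigma> 1 = 1" "\<sigma> (- x) = - \<sigma> x" "\<sigma> (x - y) = \<sigma> x - \<sigma> y"
  "\<sigma> (inverse x) = inverse (\<sigma> x)" "(\<sigma> x = \<sigma> y) = (x = y)"
  using fa_basic[OF aut] by auto

lemma sp_add_idx: "(\<sigma>^^(i+j)) x = (\<sigma>^^i) ((\<sigma>^^j) x)"
  by (simp add: funpow_add)

lemma sp_m: "(\<sigma>^^(n+m)) x = (\<sigma>^^n) x"
  by (simp add: funpow_add \<sigma>m)

lemma sp_m': "(\<sigma>^^m) x = x"
  by (simp add: \<sigma>m)

lemma in_C: "x \<in> C \<longleftrightarrow> (\<forall>i\<ge>m. x i = 0)" by (simp add: cyc_carrier_def)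

lemma tm_C: "i < m \<Longrightarrow> tm a i \<in> C" by (auto simp: in_C tm_def)
lemma cconst_C: "cconst a \<in> C" using tm_C[OF mpos] by (simp add: cconst_tm)

definition mulx where
  "mulx g h = (\<lambda>n. if n < m then tmult \<sigma> g h n + tmult \<sigma> g h (n+m) * (\<sigma>^^n) d else 0)"

lemma mulx_C: "mulx g h \<in> C" by (simp add: in_C mulx_def)

lemma tmult_high: assumes "g \<in> C" "h \<in> C" "2*m \<le> n" shows "tmult \<sigma> g h n = 0"
  unfolding tmult_def
proof (rule sum.neutral, rule ballI)
  fix i assume "i \<in> {..n}"
  show "g i * (\<sigma> ^^ i) (h (n - i)) = 0"
  proof (cases "i < m")
    case True then have "h (n - i) = 0" using assms by (auto simp: in_C)
    then show ?thesis by (simp add: sp)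
  next
    case False then show ?thesis using assms by (auto simp: in_C)
  qed
qed

lemma tmult_tmd: "tmult \<sigma> q (tm_minus_d m d) n = (if m \<le> n then q (n-m) else 0) - q n * (\<sigma>^^n) d"
proof -
  have "tmult \<sigma> q (tm_minus_d m d) n = (\<Sum>i\<le>n. (if m \<le> n \<and> i = n - m then q i else 0) - (if i = n then q i * (\<sigma>^^i) d else 0))"
    unfolding tmult_def tm_minus_d_def
    by (rule sum.cong) (auto simp: sp right_diff_distrib)
  also have "\<dots> = (if m \<le> n then q (n-m) else 0) - q n * (\<sigma>^^n) d"
    by (cases "m \<le> n") (simp_all add: sum_subtractf sum_negf)
  finally show ?thesis .
qed

lemma cyc_mult_eq: assumes g: "g \<in> C" and h: "h \<in> C" shows "cyc_mult \<sigma> m d g h = mulx g h"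
  unfolding cyc_mult_def
proof (rule the_equality)
  define c where "c = tmult \<sigma> g h"
  have ch: "2*m \<le> n \<Longrightarrow> c n = 0" for n using tmult_high[OF g h] by (simp add: c_def)
  define q where "q s = c (s + m)" for s
  have "q s = 0" if "m \<le> s" for s using ch[of "s+m"] that by (simp add: q_def)
  then have "{s. q s \<noteq> 0} \<subseteq> {..<m}" by (metis (mono_tags) lessThan_iff linorder_not_le mem_Collect_eq subsetI)
  then have "finite {s. q s \<noteq> 0}" by (rule finite_subset) simp
  then have qt: "q \<in> tpolys" by (simp add: tpolys_def)
  have qe: "tmult \<sigma> g h = (\<lambda>n. tmult \<sigma> q (tm_minus_d m d) n + mulx g h n)"
  proof
    fix n show "tmult \<sigma> g h n = tmult \<sigma> q (tm_minus_d m d) n + mulx g h n"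
    proof -
      have mx: "mulx g h n = (if n < m then c n + c (n+m) * (\<sigma>^^n) d else 0)" unfolding mulx_def c_def by (rule refl)
      have "c n = tmult \<sigma> q (tm_minus_d m d) n + mulx g h n"
      proof (cases "n < m")
        case True
        have t: "tmult \<sigma> q (tm_minus_d m d) n = - (q n * (\<sigma>^^n) d)"
          unfolding tmult_tmd using True by simp
        show ?thesis unfolding t mx q_def using True by simp
      next
        case False
        then have "n - m + m = n" "c (n + m) = 0" using ch[of "n+m"] by auto
        moreover have "tmult \<sigma> q (tm_minus_d m d) n = q (n - m) - q n * (\<sigma>^^n) d"
          unfolding tmult_tmd using False by simp
        ultimately show ?thesis unfolding mx q_def using False by simp
      qed
      then show ?thesis by (simp only: c_def)
    qed
  qed
  show "mulx g h \<in> C \<and> (\<exists>q\<in>tpolys. tmult \<sigma> g h = (\<lambda>n. tmult \<sigma> q (tm_minus_d m d) n + mulx g h n))"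
  proof (rule conjI)
    show "mulx g h \<in> C" by (rule mulx_C)
    show "\<exists>q\<in>tpolys. tmult \<sigma> g h = (\<lambda>n. tmult \<sigma> q (tm_minus_d m d) n + mulx g h n)"
      by (rule bexI[where P="\<lambda>q'. tmult \<sigma> g h = (\<lambda>n. tmult \<sigma> q' (tm_minus_d m d) n + mulx g h n)", OF qe qt])
  qed
next
  fix r assume "r \<in> C \<and> (\<exists>q\<in>tpolys. tmult \<sigma> g h = (\<lambda>n. tmult \<sigma> q (tm_minus_d m d) n + r n))"
  then obtain q where r: "r \<in> C" and qt: "q \<in> tpolys" and eq0: "tmult \<sigma> g h = (\<lambda>n. tmult \<sigma> q (tm_minus_d m d) n + r n)"
    by blast
  have eq: "tmult \<sigma> g h n = tmult \<sigma> q (tm_minus_d m d) n + r n" for n by (simp add: eq0)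
  define c where "c = tmult \<sigma> g h"
  have ch: "2*m \<le> n \<Longrightarrow> c n = 0" for n using tmult_high[OF g h] by (simp add: c_def)
  have qc: "q s = c (s + m)" for s
  proof (rule ccontr)
    assume ne: "q s \<noteq> c (s + m)"
    define D where "D = {s. q s \<noteq> c (s + m)}"
    have "c (s + m) = 0" if "m \<le> s" for s using ch[of "s+m"] that by simp
    then have "D \<subseteq> {s. q s \<noteq> 0} \<union> {..<m}" unfolding D_def
    proof (intro subsetI)
      fix s assume cz: "\<And>s. m \<le> s \<Longrightarrow> c (s + m) = 0" and "s \<in> {s. q s \<noteq> c (s + m)}"
      then have ne: "q s \<noteq> c (s + m)" by simp
      show "s \<in> {s. q s \<noteq> 0} \<union> {..<m}"
      proof (cases "m \<le> s")
        case True then show ?thesis using ne cz[OF True] by simp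
      next
        case False then show ?thesis by simp
      qed
    qed
    moreover have "finite ({s. q s \<noteq> 0} \<union> {..<m})" using qt by (simp add: tpolys_def)
    ultimately have fD: "finite D" by (rule finite_subset)
    have "s \<in> D" using ne by (simp add: D_def)
    then have Dne: "D \<noteq> {}" by auto
    define s0 where "s0 = Max D"
    have s0D: "s0 \<in> D" using fD Dne by (simp add: s0_def)
    have "s0 + m \<notin> D"
    proof
      assume "s0 + m \<in> D"
      then have "s0 + m \<le> s0" using Max_ge[OF fD] s0_def by blast
      then show False using mpos by simp
    qed
    then have q1: "q (s0 + m) = 0" using ch[of "s0 + m + m"] by (simp add: D_def)
    have "c (s0 + m) = q s0 - q (s0 + m) * (\<sigma>^^(s0+m)) d + r (s0 + m)"
      using eq[of "s0 + m"] by (simp add: c_def tmult_tmd)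
    then have "c (s0 + m) = q s0" using q1 r by (simp add: in_C)
    then show False using s0D by (simp add: D_def)
  qed
  show "r = mulx g h"
  proof
    fix n show "r n = mulx g h n"
    proof (cases "n < m")
      case True then show ?thesis using eq[of n] by (simp add: tmult_tmd mulx_def qc c_def algebra_simps)
    next
      case False then show ?thesis using r by (simp add: mulx_def in_C)
    qed
  qed
qed

lemma tmult_smult_left: "tmult \<sigma> (\<lambda>n. a * g n) h n = a * tmult \<sigma> g h n"
  by (simp add: tmult_def sum_distrib_left mult.assoc)

lemma mulx_smult_left: "mulx (\<lambda>n. a * g n) h = (\<lambda>n. a * mulx g h n)"
  by (simp add: mulx_def tmult_smult_left algebra_simps fun_eq_iff)

lemma tmult_cconst_left: "tmult \<sigma> (cconst a) h n = a * h n"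
proof -
  have "tmult \<sigma> (cconst a) h n = (\<Sum>i\<le>n. if i = 0 then a * h n else 0)"
    unfolding tmult_def cconst_def by (rule sum.cong) auto
  then show ?thesis by simp
qed

lemma mulx_cconst_left: assumes "h \<in> C" shows "mulx (cconst a) h = (\<lambda>n. a * h n)"
  using assms by (auto simp: mulx_def tmult_cconst_left in_C fun_eq_iff)

lemma tmult_tm_right: "tmult \<sigma> x (tm b j) n = (if j \<le> n then x (n-j) * (\<sigma>^^(n-j)) b else 0)"
proof -
  have "tmult \<sigma> x (tm b j) n = (\<Sum>i\<le>n. if i = n - j then (if j \<le> n then x i * (\<sigma>^^i) b else 0) else 0)"
    unfolding tmult_def tm_def by (rule sum.cong) (auto simp: sp)
  then show ?thesis by simp
qed

lemma mulx_tm_right_pt: assumes x: "x \<in> C" and j: "j < m"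
  shows "mulx x (tm b j) n = (if n < m then (if j \<le> n then x (n-j) * (\<sigma>^^(n-j)) b
            else x (n+m-j) * (\<sigma>^^(n+m-j)) b * (\<sigma>^^n) d) else 0)"
proof (cases "n < m")
  case True
  show ?thesis
  proof (cases "j \<le> n")
    case jn: True
    have "m \<le> n + m - j" using jn by simp
    then have "x (n+m-j) = 0" using x by (simp add: in_C)
    then show ?thesis using True jn j by (simp add: mulx_def tmult_tm_right)
  next
    case False
    then show ?thesis using True j by (simp add: mulx_def tmult_tm_right)
  qed
qed (simp add: mulx_def)

lemma tm_mult: assumes ij: "i < m" "j < m"
  shows "mulx (tm a i) (tm b j) = (if i + j < m then tm (a * (\<sigma>^^i) b) (i+j)
     else tm (a * (\<sigma>^^i) b * (\<sigma>^^(i+j-m)) d) (i+j-m))"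
proof
  fix n
  note R = mulx_tm_right_pt[OF tm_C[OF ij(1)] ij(2)]
  show "mulx (tm a i) (tm b j) n = (if i + j < m then tm (a * (\<sigma>^^i) b) (i+j)
     else tm (a * (\<sigma>^^i) b * (\<sigma>^^(i+j-m)) d) (i+j-m)) n"
  proof (cases "n < m")
    case nm: True
    show ?thesis
    proof (cases "j \<le> n")
      case True
      have e1: "(n - j = i) = (n = i + j)" using True by arith
      have e2: "n \<noteq> i + j - m \<or> i + j < m" using True ij by arith
      show ?thesis
      proof (cases "i + j < m")
        case True
        then show ?thesis using nm \<open>j \<le> n\<close> e1 by (simp only: R) (simp add: tm_def)
      next
        case False
        then have "n \<noteq> i + j" using nm by arith
        then show ?thesis using nm \<open>j \<le> n\<close> e1 e2 False by (simp only: R) (simp add: tm_def)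
      qed
    next
      case False
      have e3: "(n + m - j = i) = (n = i + j - m \<and> \<not> i + j < m)" using False nm ij by arith
      have e4: "n \<noteq> i + j" using False by simp
      show ?thesis using nm False e3 e4 by (simp only: R) (simp add: tm_def)
    qed
  next
    case False
    then have "i + j < m \<longrightarrow> n \<noteq> i + j" "n \<noteq> i + j - m" using ij by arith+
    then show ?thesis using False by (simp only: R) (simp add: tm_def)
  qed
qed

lemma one_left: "x \<in> C \<Longrightarrow> mulx (cconst 1) x = x"
  by (simp add: mulx_cconst_left)

lemma one_right: assumes x: "x \<in> C" shows "mulx x (cconst 1) = x"
proof
  fix n
  show "mulx x (cconst 1) n = x n"
    unfolding cconst_tm mulx_tm_right_pt[OF x mpos] using x by (simp add: sp in_C)
qed

lemma mulx_cconst_tm: assumes "i < m" shows "mulx (cconst a) (tm b i) = tm (a * b) i"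
  unfolding mulx_cconst_left[OF tm_C[OF assms]] by (simp add: fun_eq_iff tm_def)

lemma mulx_cc: "mulx (cconst a) (cconst b) = cconst (a * b)"
  unfolding mulx_cconst_left[OF cconst_C] by (simp add: fun_eq_iff cconst_def)

definition P :: "'k \<Rightarrow> nat \<Rightarrow> 'k" where "P k n = (\<Prod>l<n. (\<sigma>^^l) k)"

lemma P_0[simp]: "P k 0 = 1" by (simp add: P_def)
lemma P_Suc: "P k (Suc n) = P k n * (\<sigma>^^n) k" by (simp add: P_def)
lemma P_1[simp]: "P k 1 = k" by (simp add: P_def)
lemma P_Suc0[simp]: "P k (Suc 0) = k" by (simp add: P_def)

lemma P_add: "P k (i + j) = P k i * (\<sigma>^^i) (P k j)"
proof (induction j)
  case 0 then show ?case by (simp add: sp)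
next
  case (Suc j)
  have "P k (i + Suc j) = P k (i + j) * (\<sigma>^^(i+j)) k" by (simp add: P_Suc)
  also have "\<dots> = P k i * (\<sigma>^^i) (P k j) * (\<sigma>^^i) ((\<sigma>^^j) k)" by (simp add: Suc sp_add_idx)
  also have "\<dots> = P k i * (\<sigma>^^i) (P k (Suc j))" by (simp add: P_Suc sp)
  finally show ?case .
qed

lemma P_norm: "P k m = normKF \<sigma> m k" by (simp add: P_def normKF_def)

lemma P_period: "normKF \<sigma> m k = 1 \<Longrightarrow> P k (n + m) = P k n"
  using P_add[of k n m] by (simp add: P_norm sp)

lemma P_nz: "k \<noteq> 0 \<Longrightarrow> P k n \<noteq> 0"
  by (induction n) (auto simp: P_Suc sp(8)[of _ _ 0, simplified sp(3)])

lemma norm_nz: assumes "normKF \<sigma> m k = 1" shows "k \<noteq> 0"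
proof
  assume k: "k = 0"
  obtain m' where "m = Suc m'" using mpos by (cases m) auto
  then have "P k m = 0" using k by (simp add: P_Suc sp)
  then show False using assms by (simp add: P_norm)
qed

lemma tmult_P: "tmult \<sigma> (\<lambda>n. x n * P k n) (\<lambda>n. y n * P k n) n = P k n * tmult \<sigma> x y n"
  unfolding tmult_def sum_distrib_left
proof (rule sum.cong[OF refl])
  fix i assume "i \<in> {..n}"
  then have "P k n = P k i * (\<sigma>^^i) (P k (n - i))" using P_add[of k i "n-i"] by simp
  then show "x i * P k i * (\<sigma> ^^ i) (y (n - i) * P k (n - i)) = P k n * (x i * (\<sigma> ^^ i) (y (n - i)))"
    by (simp add: sp)
qed

lemma mulx_P: assumes "normKF \<sigma> m k = 1"
  shows "mulx (\<lambda>n. x n * P k n) (\<lambda>n. y n * P k n) = (\<lambda>n. mulx x y n * P k n)"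
proof
  fix n show "mulx (\<lambda>n. x n * P k n) (\<lambda>n. y n * P k n) n = mulx x y n * P k n"
    unfolding mulx_def tmult_P P_period[OF assms] by (simp add: algebra_simps)
qed

definition Hk :: "'k \<Rightarrow> (nat \<Rightarrow> 'k) \<Rightarrow> nat \<Rightarrow> 'k" where
  "Hk k = (\<lambda>x\<in>C. \<lambda>n. x n * P k n)"

lemma Hk_C: "x \<in> C \<Longrightarrow> Hk k x = (\<lambda>n. x n * P k n)" by (simp add: Hk_def)


lemma sp_pow: "(\<sigma>^^i) (x ^ r) = ((\<sigma>^^i) x) ^ r"
  by (induction r) (simp_all add: sp)

definition Nuc where "Nuc = {x\<in>C. \<forall>y\<in>C. \<forall>z\<in>C. mulx (mulx x y) z = mulx x (mulx y z)}"

lemma cconst_Nuc: "cconst a \<in> Nuc"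
  unfolding Nuc_def using cconst_C by (simp add: mulx_cconst_left mulx_smult_left mulx_C)


end

lemma fixed_subfield: assumes "field_aut \<tau>" shows "is_subfield {x. \<tau> x = x}"
  using fa_basic[OF assms] unfolding is_subfield_def by auto

locale cycF = cyc \<sigma> m d for \<sigma> :: "'k::field \<Rightarrow> 'k" and m d +
  fixes F :: "'k set"
  assumes m2: "m \<ge> 2"
    and F_sub: "is_subfield F"
    and \<sigma>_gal: "\<sigma> \<in> Gal F"
    and \<sigma>_ord2: "\<forall>i. 0 < i \<and> i < m \<longrightarrow> \<sigma> ^^ i \<noteq> id"
    and cyclic: "Gal F = {\<sigma> ^^ i | i. i < m}"
    and galois: "fixed_field (Gal F) = F"
    and no_roots: "\<forall>x\<in>F. x ^ m = 1 \<longrightarrow> x = 1"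
    and d_nz: "d \<noteq> 0"
    and d_gen: "\<forall>L. is_subfield L \<and> F \<subseteq> L \<and> d \<in> L \<longrightarrow> L = UNIV"
begin

lemma sp_fixF: "a \<in> F \<Longrightarrow> (\<sigma>^^i) a = a"
proof (induction i)
  case (Suc i)
  have "\<sigma> a = a" using \<sigma>_gal Suc.prems by (simp add: Gal_def)
  then show ?case using Suc by simp
qed simp

lemma sp_surj: "surj (\<sigma>^^i)"
  using fa_funpow[OF aut, of i] by (simp add: field_aut_def bij_def)

lemma sp_inj_idx: assumes "i < m" "j < m" "\<sigma>^^i = \<sigma>^^j" shows "i = j"
proof (rule ccontr)
  assume ne: "i \<noteq> j"
  have gen: "a = b" if ab: "a < b" "b < m" "\<sigma>^^a = \<sigma>^^b" for a b
  proof -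
    have "\<sigma>^^b = \<sigma>^^(b-a) \<circ> \<sigma>^^a" using ab funpow_add[of "b-a" a \<sigma>] by simp
    then have "(\<sigma>^^(b-a)) ((\<sigma>^^a) x) = (\<sigma>^^a) x" for x using ab(3) by (metis comp_apply)
    then have "(\<sigma>^^(b-a)) y = y" for y using sp_surj[of a] by (metis surjD)
    then have "\<sigma>^^(b-a) = id" by auto
    then show ?thesis using \<sigma>_ord2 ab by auto
  qed
  show False
  proof (cases "i < j")
    case True then show False using gen[of i j] assms ne by simp
  next
    case False then have "j < i" using ne by simp
    then show False using gen[of j i] assms ne by simp
  qed
qed

lemma sp_d: assumes "0 < i" "i < m" shows "(\<sigma>^^i) d \<noteq> d"
proof
  assume dd: "(\<sigma>^^i) d = d"
  let ?L = "{x. (\<sigma>^^i) x = x}"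
  have "is_subfield ?L" by (rule fixed_subfield[OF fa_funpow[OF aut]])
  moreover have "F \<subseteq> ?L" using sp_fixF by auto
  moreover have "d \<in> ?L" using dd by simp
  ultimately have LU: "?L = UNIV" using d_gen[rule_format, of ?L] by simp
  have "(\<sigma>^^i) x = x" for x
  proof -
    have "x \<in> ?L" unfolding LU by simp
    then show ?thesis by simp
  qed
  then have "\<sigma>^^i = id" by (simp add: fun_eq_iff)
  then show False using \<sigma>_ord2 assms by auto
qed

lemma sigma_norm: "\<sigma> (P k m) = P k m"
proof (cases "k = 0")
  case True
  obtain m' where "m = Suc m'" using mpos by (cases m) auto
  then show ?thesis using True by (simp add: P_Suc sp sp1)
next
  case False
  have "P k (1 + m) = k * \<sigma> (P k m)" using P_add[of k 1 m] by simp
  moreover have "P k (m + 1) = P k m * k" using P_Suc[of k m] by (simp add: sp_m')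
  ultimately have "k * \<sigma> (P k m) = k * P k m" by (simp add: add.commute mult.commute)
  then show ?thesis using False by simp
qed

lemma norm_F: "normKF \<sigma> m k \<in> F"
proof -
  have "(\<sigma>^^i) (P k m) = P k m" for i
    by (induction i) (simp_all add: sigma_norm)
  then have "normKF \<sigma> m k \<in> fixed_field (Gal F)"
    unfolding cyclic fixed_field_def P_norm[symmetric] by auto
  then show ?thesis using galois by simp
qed

lemma hilbert90: assumes N: "normKF \<sigma> m k = 1" shows "\<exists>c. c \<noteq> 0 \<and> \<sigma> c = k * c"
proof -
  define th where "th a = (\<Sum>i<m. P k i * (\<sigma>^^i) a)" for a
  have inj: "inj_on (\<lambda>i. \<sigma>^^i) {..<m}" using sp_inj_idx by (auto simp: inj_on_def)
  have "\<exists>a. th a \<noteq> 0"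
  proof (rule ccontr)
    assume "\<not> (\<exists>a. th a \<noteq> 0)"
    then have "\<forall>a. (\<Sum>i\<in>{..<m}. P k i * (\<sigma>^^i) a) = 0" by (simp add: th_def)
    then have "\<forall>i\<in>{..<m}. P k i = 0"
      using dedekind[of "\<lambda>i. \<sigma>^^i" "{..<m}" "P k"] inj by (simp add: sp)
    from this[rule_format, of 0] mpos have "P k 0 = 0" by simp
    then show False by simp
  qed
  then obtain a where a: "th a \<noteq> 0" by blast
  have "k * \<sigma> (th a) = (\<Sum>i<m. P k (Suc i) * (\<sigma>^^(Suc i)) a)"
    unfolding th_def fa_sum[OF aut] sum_distrib_left
  proof (rule sum.cong[OF refl])
    fix i
    have "P k (1 + i) = k * \<sigma> (P k i)" using P_add[of k 1 i] by simp
    then show "k * \<sigma> (P k i * (\<sigma> ^^ i) a) = P k (Suc i) * (\<sigma> ^^ Suc i) a"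
      by (simp add: sp1 funpow_swap1)
  qed
  also have "\<dots> = th a"
  proof -
    have "(\<Sum>i<Suc m. P k i * (\<sigma>^^i) a) = P k 0 * (\<sigma>^^0) a + (\<Sum>i<m. P k (Suc i) * (\<sigma>^^(Suc i)) a)"
      by (rule sum.lessThan_Suc_shift)
    moreover have "(\<Sum>i<Suc m. P k i * (\<sigma>^^i) a) = th a + P k m * (\<sigma>^^m) a"
      by (simp add: th_def)
    ultimately show ?thesis using N by (simp add: P_norm sp_m')
  qed
  finally have ks: "k * \<sigma> (th a) = th a" .
  then have k0: "k \<noteq> 0" using a by auto
  have s: "\<sigma> (th a) = th a / k" using ks k0 by (simp add: eq_divide_eq mult.commute)
  have "\<sigma> (inverse (th a)) = inverse (th a / k)" by (simp add: sp1 s)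
  also have "\<dots> = k * inverse (th a)" by (simp add: divide_inverse mult.commute)
  finally have "\<sigma> (inverse (th a)) = k * inverse (th a)" .
  then show ?thesis using a by (intro exI[of _ "inverse (th a)"]) simp
qed

lemma Nuc_const: assumes x: "x \<in> Nuc" shows "x = cconst (x 0)"
proof
  fix n
  have xC: "x \<in> C" using x by (simp add: Nuc_def)
  show "x n = cconst (x 0) n"
  proof (cases "n = 0")
    case True then show ?thesis by (simp add: cconst_def)
  next
    case n0: False
    show ?thesis
    proof (cases "n < m")
      case False then show ?thesis using xC n0 by (simp add: in_C cconst_def)
    next
      case nm: True
      have j1: "m - n < m" using n0 nm by simp
      have yz: "mulx (tm 1 (m - n)) (tm 1 n) = cconst d" using j1 nm n0 by (simp add: tm_mult sp cconst_tm)
      have assoc: "mulx (mulx x (tm 1 (m - n))) (tm 1 n) = mulx x (mulx (tm 1 (m - n)) (tm 1 n))"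
        using x tm_C[OF j1] tm_C[OF nm] unfolding Nuc_def by blast
      have "mulx (mulx x (tm 1 (m - n))) (tm 1 n) n = mulx x (tm 1 (m - n)) 0"
        unfolding mulx_tm_right_pt[OF mulx_C nm] using nm by (simp add: sp)
      also have "\<dots> = x n * d"
        unfolding mulx_tm_right_pt[OF xC j1] using nm n0 by (simp add: sp)
      finally have l: "mulx (mulx x (tm 1 (m - n))) (tm 1 n) n = x n * d" .
      have r: "mulx x (cconst d) n = x n * (\<sigma>^^n) d"
        unfolding cconst_tm mulx_tm_right_pt[OF xC mpos] using nm by simp
      have "x n * d = mulx x (cconst d) n" using l assoc yz by simp
      then have "x n * d = x n * (\<sigma>^^n) d" using r by (rule trans)
      moreover have "(\<sigma>^^n) d \<noteq> d" using sp_d[of n] n0 nm by simp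
      ultimately have "x n = 0" by (metis mult_left_cancel)
      then show ?thesis using n0 by (simp add: cconst_def)
    qed
  qed
qed

lemma aut_props:
  assumes "G \<in> cyc_AutF F \<sigma> m d"
  shows "G \<in> extensional C" "bij_betw G C C"
    "\<And>x y. x \<in> C \<Longrightarrow> y \<in> C \<Longrightarrow> G (\<lambda>i. x i + y i) = (\<lambda>i. G x i + G y i)"
    "\<And>c x. c \<in> F \<Longrightarrow> x \<in> C \<Longrightarrow> G (\<lambda>i. c * x i) = (\<lambda>i. c * G x i)"
    "\<And>x. x \<in> C \<Longrightarrow> G x \<in> C"
    "\<And>x y. x \<in> C \<Longrightarrow> y \<in> C \<Longrightarrow> G (mulx x y) = mulx (G x) (G y)"
    "\<And>x y. x \<in> C \<Longrightarrow> y \<in> C \<Longrightarrow> G x = G y \<Longrightarrow> x = y"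
    "\<And>y. y \<in> C \<Longrightarrow> \<exists>x\<in>C. G x = y"
proof -
  have A: "G \<in> extensional C \<and> bij_betw G C C
      \<and> (\<forall>x\<in>C. \<forall>y\<in>C. G (\<lambda>i. x i + y i) = (\<lambda>i. G x i + G y i))
      \<and> (\<forall>c\<in>F. \<forall>x\<in>C. G (\<lambda>i. c * x i) = (\<lambda>i. c * G x i))
      \<and> (\<forall>x\<in>C. \<forall>y\<in>C. G (cyc_mult \<sigma> m d x y) = cyc_mult \<sigma> m d (G x) (G y))"
    using assms unfolding cyc_AutF_def by (rule CollectD)
  then show "G \<in> extensional C" "bij_betw G C C" by simp_all
  show "\<And>x y. x \<in> C \<Longrightarrow> y \<in> C \<Longrightarrow> G (\<lambda>i. x i + y i) = (\<lambda>i. G x i + G y i)"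
    "\<And>c x. c \<in> F \<Longrightarrow> x \<in> C \<Longrightarrow> G (\<lambda>i. c * x i) = (\<lambda>i. c * G x i)" using A by simp_all
  show GC: "\<And>x. x \<in> C \<Longrightarrow> G x \<in> C" using A bij_betwE by blast
  show "\<And>x y. x \<in> C \<Longrightarrow> y \<in> C \<Longrightarrow> G (mulx x y) = mulx (G x) (G y)"
  proof -
    fix x y assume xy: "x \<in> C" "y \<in> C"
    then have "G (cyc_mult \<sigma> m d x y) = cyc_mult \<sigma> m d (G x) (G y)" using A by simp
    then show "G (mulx x y) = mulx (G x) (G y)" using xy GC by (simp add: cyc_mult_eq)
  qed
  show "\<And>x y. x \<in> C \<Longrightarrow> y \<in> C \<Longrightarrow> G x = G y \<Longrightarrow> x = y"
    using A by (meson bij_betw_imp_inj_on inj_onD)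
  show "\<And>y. y \<in> C \<Longrightarrow> \<exists>x\<in>C. G x = y"
  proof -
    fix y assume "y \<in> C"
    then have "y \<in> G ` C" using A by (simp add: bij_betw_def)
    then show "\<exists>x\<in>C. G x = y" by auto
  qed
qed

lemma aut_form:
  assumes GA: "G \<in> cyc_AutF F \<sigma> m d"
  shows "normKF \<sigma> m (G (tm 1 1) 1) = 1 \<and> (\<forall>x\<in>C. G x = Hk (G (tm 1 1) 1) x)"
proof -
  note Gadd = aut_props(3)[OF GA] and GF = aut_props(4)[OF GA] and GC = aut_props(5)[OF GA]
    and Gm = aut_props(6)[OF GA] and Ginj = aut_props(7)[OF GA] and Gsurj = aut_props(8)[OF GA]
  have m1: "1 < m" using m2 by simp
  have G1: "G (cconst 1) = cconst 1"
  proof -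
    define e where "e = G (cconst 1)"
    have eC: "e \<in> C" using GC[OF cconst_C] by (simp add: e_def)
    have "mulx e y = y" if y: "y \<in> C" for y
    proof -
      obtain x where x: "x \<in> C" "G x = y" using Gsurj[OF y] by blast
      have "mulx e y = G (mulx (cconst 1) x)" using Gm[OF cconst_C x(1)] x(2) by (simp add: e_def)
      also have "\<dots> = y" using x by (simp add: one_left)
      finally show ?thesis .
    qed
    then have "mulx e (cconst 1) = cconst 1" using cconst_C by blast
    moreover have "mulx e (cconst 1) = e" using eC by (rule one_right)
    ultimately show ?thesis by (simp add: e_def)
  qed
  have NG: "G x \<in> Nuc \<longleftrightarrow> x \<in> Nuc" if x: "x \<in> C" for x
  proof
    assume N: "G x \<in> Nuc"
    have "mulx (mulx x y) z = mulx x (mulx y z)" if yz: "y \<in> C" "z \<in> C" for y z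
    proof (rule Ginj)
      show "mulx (mulx x y) z \<in> C" "mulx x (mulx y z) \<in> C" by (rule mulx_C)+
      have "G (mulx (mulx x y) z) = mulx (mulx (G x) (G y)) (G z)" using x yz mulx_C by (simp add: Gm)
      also have "\<dots> = mulx (G x) (mulx (G y) (G z))" using N yz GC unfolding Nuc_def by blast
      also have "\<dots> = G (mulx x (mulx y z))" using x yz mulx_C by (simp add: Gm)
      finally show "G (mulx (mulx x y) z) = G (mulx x (mulx y z))" .
    qed
    then show "x \<in> Nuc" using x unfolding Nuc_def by blast
  next
    assume N: "x \<in> Nuc"
    have "mulx (mulx (G x) y) z = mulx (G x) (mulx y z)" if yz: "y \<in> C" "z \<in> C" for y z
    proof -
      obtain y' where y': "y' \<in> C" "G y' = y" using Gsurj[OF yz(1)] by blast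
      obtain z' where z': "z' \<in> C" "G z' = z" using Gsurj[OF yz(2)] by blast
      have "mulx (mulx (G x) y) z = G (mulx (mulx x y') z')" using x y' z' mulx_C by (simp add: Gm)
      also have "\<dots> = G (mulx x (mulx y' z'))" using N y' z' unfolding Nuc_def by simp
      also have "\<dots> = mulx (G x) (mulx y z)" using x y' z' mulx_C by (simp add: Gm)
      finally show ?thesis .
    qed
    then show "G x \<in> Nuc" using GC[OF x] unfolding Nuc_def by blast
  qed
  have Nc: "x \<in> Nuc \<Longrightarrow> x = cconst (x 0)" for x by (rule Nuc_const)
  define \<tau> where "\<tau> a = G (cconst a) 0" for a
  have Gc: "G (cconst a) = cconst (\<tau> a)" for a
  proof -
    have "G (cconst a) \<in> Nuc" using NG[OF cconst_C] cconst_Nuc by simp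
    then show ?thesis unfolding \<tau>_def by (rule Nc)
  qed
  have cadd: "cconst (a + b) = (\<lambda>i. cconst a i + cconst b i)" for a b :: 'k by (simp add: cconst_def fun_eq_iff)
  have \<tau>add: "\<tau> (a + b) = \<tau> a + \<tau> b" for a b
  proof -
    have "G (cconst (a+b)) = (\<lambda>i. G (cconst a) i + G (cconst b) i)" unfolding cadd by (rule Gadd[OF cconst_C cconst_C])
    then have "cconst (\<tau> (a+b)) = (\<lambda>i. cconst (\<tau> a) i + cconst (\<tau> b) i)" by (simp only: Gc)
    from fun_cong[OF this, of 0] show ?thesis by (simp add: cconst_def)
  qed
  have \<tau>mul: "\<tau> (a * b) = \<tau> a * \<tau> b" for a b
  proof -
    have "G (cconst (a * b)) = cconst (\<tau> a * \<tau> b)"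
      using Gm[OF cconst_C cconst_C, of a b] by (simp add: mulx_cc Gc)
    then have "cconst (\<tau> (a * b)) = cconst (\<tau> a * \<tau> b)" by (simp only: Gc)
    from fun_cong[OF this, of 0] show ?thesis by (simp add: cconst_def)
  qed
  have cinj: "cconst a = cconst b \<Longrightarrow> a = b" for a b :: 'k
  proof -
    assume "cconst a = cconst b"
    from fun_cong[OF this, of 0] show ?thesis by (simp add: cconst_def)
  qed
  have \<tau>inj: "inj \<tau>"
  proof (rule injI)
    fix a b assume "\<tau> a = \<tau> b"
    then have "G (cconst a) = G (cconst b)" by (simp add: Gc)
    then have "cconst a = cconst b" using Ginj cconst_C by blast
    then show "a = b" by (rule cinj)
  qed
  have \<tau>surj: "surj \<tau>"
  proof -
    have "y \<in> range \<tau>" for y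
    proof -
      obtain x where x: "x \<in> C" "G x = cconst y" using Gsurj[OF cconst_C] by blast
      then have "x \<in> Nuc" using NG[OF x(1)] cconst_Nuc by simp
      then have "x = cconst (x 0)" by (rule Nc)
      then have "G (cconst (x 0)) = cconst y" using x by simp
      then have "\<tau> (x 0) = y" by (simp add: Gc cinj)
      then show ?thesis by (metis rangeI)
    qed
    then show ?thesis by auto
  qed
  have \<tau>aut: "field_aut \<tau>" unfolding field_aut_def bij_def using \<tau>inj \<tau>surj \<tau>add \<tau>mul by simp
  have \<tau>F: "\<tau> a = a" if a: "a \<in> F" for a
  proof -
    have e: "cconst a = (\<lambda>i. a * cconst 1 i)" by (auto simp: cconst_def)
    have "G (cconst a) = (\<lambda>i. a * G (cconst 1) i)" unfolding e by (rule GF[OF a cconst_C])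
    moreover have "\<tau> 1 = 1" using G1 unfolding Gc by (rule cinj)
    ultimately have "cconst (\<tau> a) = cconst a" unfolding Gc by (simp add: e[symmetric])
    then show ?thesis by (rule cinj)
  qed
  have "\<tau> \<in> Gal F" using \<tau>aut \<tau>F by (simp add: Gal_def)
  then obtain j where j: "j < m" "\<tau> = \<sigma>^^j" using cyclic by auto
  define kk where "kk = G (tm 1 1) 1"
  define u where "u = G (tm 1 1)"
  have uC: "u \<in> C" using GC[OF tm_C[OF m1]] by (simp add: u_def)
  have rel: "mulx u (cconst c) = mulx (cconst (\<sigma> c)) u" for c
  proof -
    obtain b where b: "\<tau> b = c" using \<tau>surj by (metis surjD)
    have "mulx (tm 1 1) (cconst b) = mulx (cconst (\<sigma> b)) (tm 1 1)"
      using m1 mpos by (simp add: cconst_tm tm_mult sp)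
    then have "G (mulx (tm 1 1) (cconst b)) = G (mulx (cconst (\<sigma> b)) (tm 1 1))" by simp
    then have "mulx u (cconst (\<tau> b)) = mulx (cconst (\<tau> (\<sigma> b))) u"
      using tm_C[OF m1] cconst_C by (simp add: Gm Gc u_def)
    moreover have "\<tau> (\<sigma> b) = \<sigma> (\<tau> b)" unfolding j(2) by (simp add: funpow_swap1)
    ultimately show ?thesis using b by simp
  qed
  have u_form: "u = tm kk 1"
  proof
    fix n
    show "u n = tm kk 1 n"
    proof (cases "n < m")
      case False then show ?thesis using uC m1 by (simp add: in_C tm_def)
    next
      case nm: True
      show ?thesis
      proof (cases "n = 1")
        case True then show ?thesis by (simp add: tm_def kk_def u_def)
      next
        case n1: False
        have "u n * (\<sigma>^^n) c = \<sigma> c * u n" for c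
        proof -
          have "mulx u (cconst c) n = mulx (cconst (\<sigma> c)) u n" using rel by simp
          then show ?thesis unfolding cconst_tm mulx_tm_right_pt[OF uC mpos]
              mulx_cconst_left[OF uC, unfolded cconst_tm] using nm by simp
        qed
        show ?thesis
        proof (rule ccontr)
          assume "u n \<noteq> tm kk 1 n"
          then have un: "u n \<noteq> 0" using n1 by (simp add: tm_def)
          have "(\<sigma>^^n) c = (\<sigma>^^1) c" for c
            using \<open>\<And>c. u n * (\<sigma>^^n) c = \<sigma> c * u n\<close>[of c] un by (simp add: mult.commute)
          then have "\<sigma>^^n = \<sigma>^^1" by (simp add: fun_eq_iff)
          then have "n = 1" using sp_inj_idx nm m1 by blast
          then show False using n1 by simp
        qed
      qed
    qed
  qed
  have Gtm1: "i < m \<Longrightarrow> G (tm 1 i) = tm (P kk i) i" for i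
  proof (induction i)
    case 0 then show ?case using G1 by (simp add: cconst_tm)
  next
    case (Suc i)
    have im: "i < m" using Suc.prems by simp
    have "tm 1 (Suc i) = mulx (tm 1 i) (tm 1 1)" using Suc.prems m1 im by (simp add: tm_mult sp)
    then have "G (tm 1 (Suc i)) = mulx (tm (P kk i) i) (tm kk 1)"
      using Gm[OF tm_C[OF im] tm_C[OF m1]] Suc.IH[OF im] u_form by (simp add: u_def)
    also have "\<dots> = tm (P kk (Suc i)) (Suc i)" using Suc.prems m1 im by (simp add: tm_mult P_Suc)
    finally show ?case .
  qed
  have md: "m - 1 < m" "m - 1 + 1 = m" using mpos by auto
  have Gd: "G (cconst d) = cconst (P kk m * d)"
  proof -
    have "cconst d = mulx (tm 1 (m-1)) (tm 1 1)" using md m1 by (simp add: tm_mult sp cconst_tm)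
    then have "G (cconst d) = mulx (tm (P kk (m-1)) (m-1)) (tm kk 1)"
      using Gm[OF tm_C[OF md(1)] tm_C[OF m1]] Gtm1[OF md(1)] u_form by (simp add: u_def)
    also have "\<dots> = cconst (P kk (m - 1) * (\<sigma>^^(m-1)) kk * d)" using md m1 by (simp add: tm_mult sp cconst_tm)
    also have "P kk (m - 1) * (\<sigma>^^(m-1)) kk = P kk m" using P_Suc[of kk "m-1"] md by simp
    finally show ?thesis .
  qed
  define c where "c = normKF \<sigma> m kk"
  have cF: "c \<in> F" unfolding c_def by (rule norm_F)
  have \<tau>d: "\<tau> d = c * d" using Gd unfolding Gc c_def P_norm by (rule cinj)
  have iter: "((\<sigma>^^j)^^r) d = c^r * d" for r
  proof (induction r)
    case (Suc r)
    have "((\<sigma>^^j)^^Suc r) d = (\<sigma>^^j) (c^r * d)" using Suc by simp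
    also have "\<dots> = ((\<sigma>^^j) c)^r * (\<tau> d)" using j(2) by (simp add: sp sp_pow)
    also have "\<dots> = c^Suc r * d" using \<tau>d sp_fixF[OF cF] by simp
    finally show ?case .
  qed simp
  have "(\<sigma>^^j)^^m = id" by (simp add: funpow_mult mult.commute[of j m] funpow_mult[symmetric] \<sigma>m)
  then have "d = c^m * d" using iter[of m] by simp
  then have "c^m = 1" using d_nz by simp
  then have c1: "c = 1" using no_roots cF by blast
  have N1: "normKF \<sigma> m kk = 1" using c1 c_def by simp
  have \<tau>id: "\<tau> a = a" for a
  proof -
    let ?L = "{x. \<tau> x = x}"
    have "is_subfield ?L" by (rule fixed_subfield[OF \<tau>aut])
    moreover have "F \<subseteq> ?L" using \<tau>F by auto
    moreover have "d \<in> ?L" using \<tau>d c1 by simp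
    ultimately have LU: "?L = UNIV" using d_gen[rule_format, of ?L] by simp
    have "a \<in> ?L" unfolding LU by simp
    then show ?thesis by simp
  qed
  have Gtm: "i < m \<Longrightarrow> G (tm a i) = tm (a * P kk i) i" for a i
  proof -
    assume im: "i < m"
    have "G (tm a i) = G (mulx (cconst a) (tm 1 i))" using im by (simp add: mulx_cconst_tm)
    also have "\<dots> = mulx (cconst a) (tm (P kk i) i)" using Gm[OF cconst_C tm_C[OF im]] Gtm1[OF im] by (simp add: Gc \<tau>id)
    also have "\<dots> = tm (a * P kk i) i" using im by (simp add: mulx_cconst_tm)
    finally show ?thesis .
  qed
  define tr where "tr x j = (\<lambda>n. if n < j then x n else 0)" for x :: "nat \<Rightarrow> 'k" and j
  have trC: "tr x j \<in> C" if "j \<le> m" for x j using that by (simp add: tr_def in_C)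
  have Gtr: "G (tr x j) = (\<lambda>n. tr x j n * P kk n)" if "j \<le> m" for x j
    using that
  proof (induction j)
    case 0
    have "tr x 0 = cconst 0" by (simp add: tr_def cconst_def fun_eq_iff)
    then have "G (tr x 0) = cconst 0" by (simp add: Gc \<tau>id)
    then show ?case by (simp add: tr_def cconst_def fun_eq_iff)
  next
    case (Suc j)
    have jm: "j < m" "j \<le> m" using Suc.prems by auto
    have e: "tr x (Suc j) = (\<lambda>i. tr x j i + tm (x j) j i)" by (auto simp: tr_def tm_def fun_eq_iff)
    have "G (tr x (Suc j)) = (\<lambda>i. G (tr x j) i + G (tm (x j) j) i)"
      unfolding e by (rule Gadd[OF trC[OF jm(2)] tm_C[OF jm(1)]])
    also have "\<dots> = (\<lambda>n. tr x (Suc j) n * P kk n)"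
      unfolding Suc.IH[OF jm(2)] Gtm[OF jm(1)] by (auto simp: tr_def tm_def fun_eq_iff)
    finally show ?case .
  qed
  have "G x = Hk kk x" if x: "x \<in> C" for x
  proof -
    have "tr x m = x" using x by (auto simp: tr_def in_C fun_eq_iff)
    then show ?thesis using Gtr[of m x] x by (simp add: Hk_C)
  qed
  then show ?thesis using N1 by (simp add: kk_def)
qed

lemma Hk_aut: assumes N: "normKF \<sigma> m k = 1" shows "Hk k \<in> cyc_AutF F \<sigma> m d"
proof -
  have k0: "k \<noteq> 0" by (rule norm_nz[OF N])
  have Pn: "P k n \<noteq> 0" for n by (rule P_nz[OF k0])
  define g where "g = (\<lambda>x\<in>C. \<lambda>n. x n / P k n)"
  have HC: "x \<in> C \<Longrightarrow> Hk k x \<in> C" for x by (simp add: Hk_C in_C)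
  have gC: "x \<in> C \<Longrightarrow> g x \<in> C" for x by (simp add: g_def in_C)
  have bij: "bij_betw (Hk k) C C"
  proof (rule bij_betwI[where g=g])
    show "Hk k \<in> C \<rightarrow> C" using HC by blast
    show "g \<in> C \<rightarrow> C" using gC by blast
    show "g (Hk k x) = x" if "x \<in> C" for x using that HC[OF that] Pn by (simp add: g_def Hk_C fun_eq_iff)
    show "Hk k (g y) = y" if "y \<in> C" for y using that gC[OF that] Pn by (simp add: g_def Hk_C fun_eq_iff)
  qed
  have add: "Hk k (\<lambda>i. x i + y i) = (\<lambda>i. Hk k x i + Hk k y i)" if "x \<in> C" "y \<in> C" for x y
  proof -
    have "(\<lambda>i. x i + y i) \<in> C" using that by (simp add: in_C)
    then show ?thesis using that by (simp add: Hk_C fun_eq_iff algebra_simps)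
  qed
  have sm: "Hk k (\<lambda>i. c * x i) = (\<lambda>i. c * Hk k x i)" if "x \<in> C" for c x
  proof -
    have "(\<lambda>i. c * x i) \<in> C" using that by (simp add: in_C)
    then show ?thesis using that by (simp add: Hk_C fun_eq_iff algebra_simps)
  qed
  have mul: "Hk k (cyc_mult \<sigma> m d x y) = cyc_mult \<sigma> m d (Hk k x) (Hk k y)" if "x \<in> C" "y \<in> C" for x y
  proof -
    have "Hk k (cyc_mult \<sigma> m d x y) = (\<lambda>n. mulx x y n * P k n)"
      using that by (simp add: cyc_mult_eq Hk_C mulx_C)
    also have "\<dots> = mulx (Hk k x) (Hk k y)" using that by (simp add: Hk_C mulx_P[OF N])
    also have "\<dots> = cyc_mult \<sigma> m d (Hk k x) (Hk k y)" using that HC by (simp add: cyc_mult_eq)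
    finally show ?thesis .
  qed
  show ?thesis unfolding cyc_AutF_def
    using bij add sm mul by (simp add: Hk_def)
qed

lemma tm11C: "tm 1 1 \<in> C" using m2 by (intro tm_C) simp

lemma phi_Hk: "Hk k (tm 1 1) 1 = k"
  using tm11C by (simp add: Hk_C tm_def)

lemma aut_eq: assumes GA: "G \<in> cyc_AutF F \<sigma> m d" shows "G = Hk (G (tm 1 1) 1)"
proof (rule extensionalityI)
  show "G \<in> extensional C" by (rule aut_props(1)[OF GA])
  show "Hk (G (tm 1 1) 1) \<in> extensional C" by (simp add: Hk_def)
  show "G x = Hk (G (tm 1 1) 1) x" if "x \<in> C" for x using aut_form[OF GA] that by blast
qed

end


theorem theorem2p5:
  fixes F :: "'k::field set" and \<sigma> :: "'k \<Rightarrow> 'k" and m :: nat and d :: 'k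
  assumes m2: "m \<ge> 2"
    and F_sub: "is_subfield F"
    and \<sigma>_gal: "\<sigma> \<in> Gal F"
    and \<sigma>_ord: "\<sigma> ^^ m = id" "\<forall>i. 0 < i \<and> i < m \<longrightarrow> \<sigma> ^^ i \<noteq> id"
    and cyclic: "Gal F = {\<sigma> ^^ i | i. i < m}"
    and galois: "fixed_field (Gal F) = F"
    and no_roots: "\<forall>x\<in>F. x ^ m = 1 \<longrightarrow> x = 1"
    and d_nz: "d \<noteq> 0"
    and d_gen: "\<forall>L. is_subfield L \<and> F \<subseteq> L \<and> d \<in> L \<longrightarrow> L = UNIV"
  shows "(\<forall>G\<in>cyc_AutF F \<sigma> m d. \<forall>k. G (cconst k) = cconst k)
       \<and> cyc_Aut_group F \<sigma> m d \<cong> norm_kernel_group \<sigma> m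
       \<and> (\<forall>G\<in>cyc_AutF F \<sigma> m d. cyc_inner \<sigma> m d G)"
proof -
  have aut: "field_aut \<sigma>" using \<sigma>_gal by (simp add: Gal_def)
  have mpos: "0 < m" using m2 by simp
  interpret cycF \<sigma> m d F
  proof (unfold_locales)
    show "field_aut \<sigma>" by (rule aut)
    show "0 < m" by (rule mpos)
    show "\<sigma> ^^ m = id" by (rule \<sigma>_ord(1))
  qed (fact m2 F_sub \<sigma>_gal \<sigma>_ord(2) cyclic galois no_roots d_nz d_gen)+
  define \<phi> where "\<phi> G = G (tm 1 1) 1" for G :: "(nat \<Rightarrow> 'k) \<Rightarrow> (nat \<Rightarrow> 'k)"
  have P1: "\<forall>G\<in>cyc_AutF F \<sigma> m d. \<forall>k. G (cconst k) = cconst k"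
  proof (intro ballI allI)
    fix G k assume GA: "G \<in> cyc_AutF F \<sigma> m d"
    have "G (cconst k) = Hk (G (tm 1 1) 1) (cconst k)" using aut_form[OF GA] cconst_C by blast
    also have "\<dots> = cconst k" using cconst_C[of k] by (simp add: Hk_C cconst_def fun_eq_iff)
    finally show "G (cconst k) = cconst k" .
  qed
  have carrA: "carrier (cyc_Aut_group F \<sigma> m d) = cyc_AutF F \<sigma> m d" by (simp add: cyc_Aut_group_def)
  have carrN: "carrier (norm_kernel_group \<sigma> m) = {k. normKF \<sigma> m k = 1}" by (simp add: norm_kernel_group_def)
  have hom: "\<phi> \<in> hom (cyc_Aut_group F \<sigma> m d) (norm_kernel_group \<sigma> m)"
  proof (rule homI)
    fix G assume "G \<in> carrier (cyc_Aut_group F \<sigma> m d)"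
    then have GA: "G \<in> cyc_AutF F \<sigma> m d" by (simp add: carrA)
    show "\<phi> G \<in> carrier (norm_kernel_group \<sigma> m)" using aut_form[OF GA] by (simp add: carrN \<phi>_def)
  next
    fix G H assume "G \<in> carrier (cyc_Aut_group F \<sigma> m d)" "H \<in> carrier (cyc_Aut_group F \<sigma> m d)"
    then have GA: "G \<in> cyc_AutF F \<sigma> m d" and HA: "H \<in> cyc_AutF F \<sigma> m d" by (simp_all add: carrA)
    have "\<phi> (compose C G H) = G (H (tm 1 1)) 1" using tm11C by (simp add: \<phi>_def compose_def)
    also have "\<dots> = Hk (\<phi> G) (Hk (\<phi> H) (tm 1 1)) 1"
      using aut_eq[OF GA] aut_eq[OF HA] unfolding \<phi>_def by metis
    also have "\<dots> = \<phi> G * \<phi> H"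
    proof -
      have e: "Hk (\<phi> H) (tm 1 1) = (\<lambda>n. tm 1 1 n * P (\<phi> H) n)" using tm11C by (simp add: Hk_C)
      have "(\<lambda>n. tm 1 1 n * P (\<phi> H) n) \<in> C" using m2 by (simp add: in_C tm_def)
      then show ?thesis unfolding e by (simp add: Hk_C tm_def mult.commute)
    qed
    finally show "\<phi> (G \<otimes>\<^bsub>cyc_Aut_group F \<sigma> m d\<^esub> H) = \<phi> G \<otimes>\<^bsub>norm_kernel_group \<sigma> m\<^esub> \<phi> H"
      by (simp add: cyc_Aut_group_def norm_kernel_group_def)
  qed
  have bij: "bij_betw \<phi> (carrier (cyc_Aut_group F \<sigma> m d)) (carrier (norm_kernel_group \<sigma> m))"
    unfolding carrA carrN bij_betw_def
  proof
    show "inj_on \<phi> (cyc_AutF F \<sigma> m d)"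
    proof (rule inj_onI)
      fix G H assume GA: "G \<in> cyc_AutF F \<sigma> m d" and HA: "H \<in> cyc_AutF F \<sigma> m d" and e: "\<phi> G = \<phi> H"
      have "G = Hk (\<phi> G)" using aut_eq[OF GA] by (simp add: \<phi>_def)
      also have "\<dots> = Hk (\<phi> H)" using e by simp
      also have "\<dots> = H" using aut_eq[OF HA] by (simp add: \<phi>_def)
      finally show "G = H" .
    qed
    show "\<phi> ` cyc_AutF F \<sigma> m d = {k. normKF \<sigma> m k = 1}"
    proof
      show "\<phi> ` cyc_AutF F \<sigma> m d \<subseteq> {k. normKF \<sigma> m k = 1}"
        using aut_form by (auto simp: \<phi>_def)
      show "{k. normKF \<sigma> m k = 1} \<subseteq> \<phi> ` cyc_AutF F \<sigma> m d"
      proof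
        fix k assume "k \<in> {k. normKF \<sigma> m k = 1}"
        then have N: "normKF \<sigma> m k = 1" by simp
        have "\<phi> (Hk k) = k" unfolding \<phi>_def by (rule phi_Hk)
        then show "k \<in> \<phi> ` cyc_AutF F \<sigma> m d" using Hk_aut[OF N] by (metis imageI)
      qed
    qed
  qed
  have P2: "cyc_Aut_group F \<sigma> m d \<cong> norm_kernel_group \<sigma> m"
    by (rule is_isoI[OF isoI[OF hom bij]])
  have P3: "\<forall>G\<in>cyc_AutF F \<sigma> m d. cyc_inner \<sigma> m d G"
  proof
    fix G assume GA: "G \<in> cyc_AutF F \<sigma> m d"
    define kk where "kk = G (tm 1 1) 1"
    have N: "normKF \<sigma> m kk = 1" using aut_form[OF GA] by (simp add: kk_def)
    obtain c0 where c0: "c0 \<noteq> 0" "\<sigma> c0 = kk * c0" using hilbert90[OF N] by blast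
    have Pc: "P kk n * c0 = (\<sigma>^^n) c0" for n
    proof (induction n)
      case (Suc n)
      have "P kk (Suc n) * c0 = (\<sigma>^^n) kk * (P kk n * c0)" by (simp add: P_Suc algebra_simps)
      also have "\<dots> = (\<sigma>^^n) (kk * c0)" using Suc by (simp add: sp)
      also have "\<dots> = (\<sigma>^^Suc n) c0" using c0(2) by (simp add: funpow_swap1)
      finally show ?case .
    qed simp
    have Pc': "P kk n = inverse c0 * (\<sigma>^^n) c0" for n using Pc[of n] c0(1) by (simp add: field_simps)
    have A: "cyc_mult \<sigma> m d (cconst (inverse c0)) (cconst c0) = cconst 1"
      using c0(1) by (simp add: cyc_mult_eq cconst_C mulx_cc)
    have B: "\<forall>x\<in>C. G x = cyc_mult \<sigma> m d (cyc_mult \<sigma> m d (cconst (inverse c0)) x) (cconst c0)"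
    proof
      fix x assume x: "x \<in> C"
      have sx: "(\<lambda>n. inverse c0 * x n) \<in> C" using x by (simp add: in_C)
      have "cyc_mult \<sigma> m d (cyc_mult \<sigma> m d (cconst (inverse c0)) x) (cconst c0)
          = mulx (\<lambda>n. inverse c0 * x n) (tm c0 0)"
      proof -
        have "cyc_mult \<sigma> m d (cconst (inverse c0)) x = (\<lambda>n. inverse c0 * x n)"
          using cyc_mult_eq[OF cconst_C x] mulx_cconst_left[OF x] by simp
        then show ?thesis using cyc_mult_eq[OF sx cconst_C] by (simp add: cconst_tm)
      qed
      also have "\<dots> = (\<lambda>n. x n * P kk n)"
      proof
        fix n show "mulx (\<lambda>n. inverse c0 * x n) (tm c0 0) n = x n * P kk n"
          unfolding mulx_tm_right_pt[OF sx mpos] Pc' using x by (simp add: in_C)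
      qed
      also have "\<dots> = G x" using aut_form[OF GA] x by (simp add: Hk_C kk_def)
      finally show "G x = cyc_mult \<sigma> m d (cyc_mult \<sigma> m d (cconst (inverse c0)) x) (cconst c0)" by simp
    qed
    show "cyc_inner \<sigma> m d G"
      unfolding cyc_inner_def using A B cconst_C[of c0] cconst_C[of "inverse c0"] by blast
  qed
  show ?thesis using P1 P2 P3 by blast
qed

end
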